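(* Let $\delta \ge 0$. For each integer $n \ge 1$ let $\rho_n > 0$ be the positive solution of the equation $$\int_{1/n}^\infty e^{-\rho_n x}\,Q(dx) = \bar{Q}(1/n) + \delta - \frac{\sigma^2}{2}\rho_n^2 + \mu\rho_n,$$ equivalently of $\delta - \frac{\sigma^2}{2}\rho_n^2 + \mu\rho_n + \int_{1/n}^\infty (1-e^{-\rho_n x})\,Q(dx) = 0$. Then $\rho_n$ converges, as $n \to \infty$, to the unique solution $\rho > 0$ of the generalized Lundberg equation $\delta = \varphi_D(\rho)$.
   Context: Let $\{B_t\}_{t\ge 0}$ be a standard Brownian motion and $\{G_t\}_{t\ge0}$ an independent subordinator (non-decreasing Lévy process) with drift $\mu \ge 0$ and Lévy measure $Q(dx) = q(x)\,dx$ on $(0,\infty)$, where $\int_0^\infty (1\wedge x)\,Q(dx) < \infty$. Let $\sigma > 0$ and $D_t = G_t + \sigma B_t$. Its Laplace exponent is $$\varphi_D(u) = -\mu u + \int_0^\infty (e^{-ux}-1)\,Q(dx) + \tfrac12 u^2\sigma^2,$$ so that $\mathbb{E}[e^{-uD_t}] = e^{t\varphi_D(u)}$ for $u \ge 0$. Write $\bar{Q}(x) = Q([x,\infty))$ for $x > 0$. *)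

theory Defs
  imports "HOL-Analysis.Analysis"
begin

definition levyQ :: "(real \<Rightarrow> real) \<Rightarrow> real measure" where
  "levyQ q = density lborel (\<lambda>x. indicator {0<..} x * ennreal (q x))"

text \<open>Laplace exponent of D_t = G_t + sigma B_t, with drift mu and Levy density q.\<close>
definition phiD :: "real \<Rightarrow> real \<Rightarrow> (real \<Rightarrow> real) \<Rightarrow> real \<Rightarrow> real" where
  "phiD \<mu> \<sigma> q u =
     - \<mu> * u + (LINT x | levyQ q. exp (- u * x) - 1) + u\<^sup>2 * \<sigma>\<^sup>2 / 2"

end

theory Submission
  imports Defs
begin

lemma levyQ_sets: "sets (levyQ q) = sets borel" by (simp add: levyQ_def)

lemma levyQ_meas: "f \<in> borel_measurable borel \<Longrightarrow> f \<in> borel_measurable (levyQ q)"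
  using measurable_cong_sets[OF levyQ_sets refl] by blast

lemma levyQ_AE_pos: "q \<in> borel_measurable borel \<Longrightarrow> AE x in levyQ q. x > 0"
  unfolding levyQ_def
  by (subst AE_density) (auto simp: indicator_def)

lemma exp_ineq: fixes s l :: real shows "0 \<le> s \<Longrightarrow> 0 \<le> l \<Longrightarrow> l \<le> 1 \<Longrightarrow> l * (1 - exp (- s)) \<le> 1 - exp (- (l * s))"
proof -
  assume a: "0 \<le> s" "0 \<le> l" "l \<le> 1"
  have "exp ((1 - l) *\<^sub>R (0::real) + l *\<^sub>R (-s)) \<le> (1 - l) * exp 0 + l * exp (-s)"
    using convex_onD[OF exp_convex, of l 0 "-s"] a by auto
  then show ?thesis by (simp add: algebra_simps)
qed

lemma bound1: fixes u x c :: real shows "0 \<le> u \<Longrightarrow> 0 < x \<Longrightarrow> 0 \<le> c \<Longrightarrow> c \<le> 1 \<Longrightarrow> \<bar>c * (1 - exp(-u*x))\<bar> \<le> max 1 u * min 1 x"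
proof -
  assume a: "0 \<le> u" "0 < x" "0 \<le> c" "c \<le> 1"
  have ux: "0 \<le> u*x" using a by simp
  have e1: "exp(-u*x) \<le> 1" using ux by simp
  have e2: "1 - exp(-u*x) \<le> u*x" using exp_ge_add_one_self[of "-u*x"] by simp
  have p: "0 \<le> 1 - exp(-u*x)" using e1 by simp
  have "\<bar>c * (1 - exp(-u*x))\<bar> = c * (1 - exp(-u*x))" using p a by simp
  also have "\<dots> \<le> 1 - exp(-u*x)" using p a by (simp add: mult_left_le_one_le)
  also have "\<dots> \<le> max 1 u * min 1 x"
  proof (cases "x \<le> 1")
    case True
    have "u*x \<le> max 1 u * x" using a by (intro mult_right_mono) auto
    then show ?thesis using True e2 by simp
  next
    case False
    have m: "min 1 x = 1" using False by simp
    have "0 < exp(-u*x)" by simp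
    moreover have "1 \<le> max 1 u" by simp
    ultimately show ?thesis unfolding m by linarith
  qed
  finally show ?thesis .
qed

lemma root_le:
  fixes G :: "real \<Rightarrow> real"
  assumes sig: "\<sigma> > 0" and del: "\<delta> \<ge> 0" and mu: "\<mu> \<ge> 0"
    and G: "\<And>a l. 0 \<le> l \<Longrightarrow> l \<le> 1 \<Longrightarrow> 0 \<le> a \<Longrightarrow> l * G a \<le> G (l*a)"
    and a: "0 < a" and b: "0 < b"
    and ga: "\<delta> + \<mu>*a + G a - \<sigma>\<^sup>2/2*a\<^sup>2 \<ge> 0"
    and gb: "\<delta> + \<mu>*b + G b - \<sigma>\<^sup>2/2*b\<^sup>2 = 0"
  shows "a \<le> b"
proof (rule ccontr)
  assume "\<not> a \<le> b"
  hence ba: "b < a" by simp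
  define l where "l = b / a"
  have l0: "0 < l" "l < 1" using a b ba by (auto simp: l_def)
  have bl: "b = l * a" using a by (simp add: l_def)
  have Gb: "l * G a \<le> G b" using G[of l a] l0 a bl by simp
  have "l * (\<delta> + \<mu>*a + G a - \<sigma>\<^sup>2/2*a\<^sup>2) \<ge> 0" using ga l0 by simp
  hence h1: "l*\<delta> + \<mu>*b + l * G a - \<sigma>\<^sup>2/2*a\<^sup>2*l \<ge> 0" using bl by (simp add: algebra_simps)
  have h2: "\<delta> + \<mu>*b + l * G a - \<sigma>\<^sup>2/2*a\<^sup>2*l\<^sup>2 \<le> 0" using gb Gb bl
    by (simp add: power_mult_distrib algebra_simps)
  have "(1 - l) * \<delta> \<ge> 0" using l0 del by simp
  moreover have "\<sigma>\<^sup>2/2*a\<^sup>2*(l - l\<^sup>2) > 0"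
  proof -
    have "l - l\<^sup>2 > 0" using l0 by (simp add: power2_eq_square mult_less_cancel_left1 algebra_simps)
    then show ?thesis using sig a by simp
  qed
  ultimately show False using h1 h2 by (simp add: algebra_simps)
qed

theorem mainTheorem1:
  fixes \<mu> \<sigma> \<delta> :: real and q :: "real \<Rightarrow> real" and \<rho> :: "nat \<Rightarrow> real"
  assumes mu: "\<mu> \<ge> 0"
    and sigma: "\<sigma> > 0"
    and delta: "\<delta> \<ge> 0"
    and q_meas: "q \<in> borel_measurable borel"
    and q_nonneg: "\<And>x. x > 0 \<Longrightarrow> q x \<ge> 0"
    and levy: "(\<integral>\<^sup>+ x. ennreal (min 1 x) \<partial>levyQ q) < \<infinity>"
    and rho_pos: "\<And>n. n \<ge> 1 \<Longrightarrow> \<rho> n > 0"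
    and rho_eq: "\<And>n. n \<ge> 1 \<Longrightarrow>
        \<delta> - \<sigma>\<^sup>2 / 2 * (\<rho> n)\<^sup>2 + \<mu> * \<rho> n
          + (LINT x:{1 / real n..} | levyQ q. 1 - exp (- \<rho> n * x)) = 0"
  shows "\<exists>r>0. phiD \<mu> \<sigma> q r = \<delta> \<and> (\<forall>r'>0. phiD \<mu> \<sigma> q r' = \<delta> \<longrightarrow> r' = r)
              \<and> \<rho> \<longlonglongrightarrow> r"
proof -
  define M where "M = levyQ q"
  have AEpos: "AE x in M. x > 0" unfolding M_def by (rule levyQ_AE_pos[OF q_meas])
  have meas: "\<And>f. f \<in> borel_measurable borel \<Longrightarrow> f \<in> borel_measurable M"
    unfolding M_def by (rule levyQ_meas)
  have Cint: "integrable M (\<lambda>x. min 1 x)"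
  proof (rule integrableI_nonneg)
    show "(\<lambda>x. min 1 x) \<in> borel_measurable M" by (rule meas) measurable
    show "AE x in M. 0 \<le> min 1 x" using AEpos by eventually_elim simp
    show "(\<integral>\<^sup>+ x. ennreal (min 1 x) \<partial>M) < \<infinity>" using levy by (simp add: M_def)
  qed
  define C where "C = (LINT x|M. min 1 x)"
  have intc: "integrable M (\<lambda>x. c x * (1 - exp (- u * x)))"
    if c: "c \<in> borel_measurable borel" "\<And>x. 0 \<le> c x" "\<And>x. c x \<le> 1" and u: "0 \<le> u" for c u
  proof (rule Bochner_Integration.integrable_bound[where f="\<lambda>x. max 1 u * min 1 x"])
    show "integrable M (\<lambda>x. max 1 u * min 1 x)" using Cint by simp
    show "(\<lambda>x. c x * (1 - exp (- u * x))) \<in> borel_measurable M" by (rule meas) (use c in measurable)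
    show "AE x in M. norm (c x * (1 - exp (- u * x))) \<le> norm (max 1 u * min 1 x)"
      using AEpos
    proof eventually_elim
      case (elim x)
      have "\<bar>c x * (1 - exp (- u * x))\<bar> \<le> max 1 u * min 1 x"
        using bound1[of u x "c x"] u elim c by simp
      moreover have "0 \<le> max 1 u * min 1 x" using elim by simp
      ultimately show ?case by simp
    qed
  qed
  have int1: "integrable M (\<lambda>x. 1 - exp (- u * x))" if "0 \<le> u" for u
    using intc[of "\<lambda>x. 1" u] that by simp
  have intn: "integrable M (\<lambda>x. indicator {1 / real n..} x * (1 - exp (- u * x)))" if "0 \<le> u" for u n
    using intc[of "indicator {1 / real n..}" u] that by (simp add: indicator_def)
  define F where "F u = (LINT x|M. 1 - exp (- u * x))" for u
  define Fn where "Fn n u = (LINT x|M. indicator {1 / real n..} x * (1 - exp (- u * x)))" for n u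
  have conc: "l * (c x * (1 - exp (- a * x))) \<le> c x * (1 - exp (- (l * a) * x))"
    if "0 \<le> l" "l \<le> 1" "0 \<le> a" "0 < x" "0 \<le> c x" for l a x :: real and c :: "real \<Rightarrow> real"
  proof -
    have "l * (1 - exp (- (a * x))) \<le> 1 - exp (- (l * (a * x)))"
      by (rule exp_ineq) (use that in auto)
    hence "l * (1 - exp (- a * x)) \<le> 1 - exp (- (l * a) * x)" by (simp add: mult.assoc)
    hence "c x * (l * (1 - exp (- a * x))) \<le> c x * (1 - exp (- (l * a) * x))"
      using that by (intro mult_left_mono) auto
    thus ?thesis by (simp add: algebra_simps)
  qed
  have Fconc: "l * F a \<le> F (l * a)" if "0 \<le> l" "l \<le> 1" "0 \<le> a" for l a
  proof -
    have "l * F a = (LINT x|M. l * (1 - exp (- a * x)))" by (simp add: F_def)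
    also have "\<dots> \<le> F (l * a)" unfolding F_def
    proof (rule integral_mono_AE)
      show "integrable M (\<lambda>x. l * (1 - exp (- a * x)))" using int1[of a] that by simp
      show "integrable M (\<lambda>x. 1 - exp (- (l * a) * x))" using int1[of "l * a"] that by simp
      show "AE x in M. l * (1 - exp (- a * x)) \<le> 1 - exp (- (l * a) * x)"
        using AEpos by eventually_elim (use conc[of l a _ "\<lambda>x. 1"] that in auto)
    qed
    finally show ?thesis .
  qed
  have Fnconc: "l * Fn n a \<le> Fn n (l * a)" if "0 \<le> l" "l \<le> 1" "0 \<le> a" for l a n
  proof -
    have "l * Fn n a = (LINT x|M. l * (indicator {1 / real n..} x * (1 - exp (- a * x))))" by (simp add: Fn_def)
    also have "\<dots> \<le> Fn n (l * a)" unfolding Fn_def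
    proof (rule integral_mono_AE)
      show "integrable M (\<lambda>x. l * (indicator {1 / real n..} x * (1 - exp (- a * x))))" using intn[of a] that by simp
      show "integrable M (\<lambda>x. indicator {1 / real n..} x * (1 - exp (- (l * a) * x)))" using intn[of "l * a"] that by simp
      show "AE x in M. l * (indicator {1 / real n..} x * (1 - exp (- a * x))) \<le> indicator {1 / real n..} x * (1 - exp (- (l * a) * x))"
        using AEpos by eventually_elim (use conc[of l a _ "indicator {1 / real n..}"] that in auto)
    qed
    finally show ?thesis .
  qed
  have Fn_mono: "Fn n u \<le> Fn m u" if "1 \<le> n" "n \<le> m" "0 \<le> u" for n m u
    unfolding Fn_def
  proof (rule integral_mono_AE)
    show "integrable M (\<lambda>x. indicator {1 / real n..} x * (1 - exp (- u * x)))" using intn that by simp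
    show "integrable M (\<lambda>x. indicator {1 / real m..} x * (1 - exp (- u * x)))" using intn that by simp
    have nm: "1 / real m \<le> 1 / real n" using that by (simp add: frac_le)
    show "AE x in M. indicator {1 / real n..} x * (1 - exp (- u * x)) \<le> indicator {1 / real m..} x * (1 - exp (- u * x))"
      using AEpos
    proof eventually_elim
      case (elim x)
      have "exp (- u * x) \<le> 1" using elim that by simp
      then show ?case using nm by (auto simp: indicator_def)
    qed
  qed
  have Fn_bound: "Fn n u \<le> max 1 u * C" if "0 \<le> u" for n u
  proof -
    have "Fn n u \<le> (LINT x|M. max 1 u * min 1 x)" unfolding Fn_def
    proof (rule integral_mono_AE)
      show "integrable M (\<lambda>x. indicator {1 / real n..} x * (1 - exp (- u * x)))" using intn that by simp
      show "integrable M (\<lambda>x. max 1 u * min 1 x)" using Cint by simp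
      show "AE x in M. indicator {1 / real n..} x * (1 - exp (- u * x)) \<le> max 1 u * min 1 x"
        using AEpos
      proof eventually_elim
        case (elim x)
        show ?case using bound1[of u x "indicator {1 / real n..} x"] that elim
          by (auto simp: indicator_def split: if_splits)
      qed
    qed
    also have "\<dots> = max 1 u * C" by (simp add: C_def)
    finally show ?thesis .
  qed
  have geq: "\<delta> + \<mu> * \<rho> n + Fn n (\<rho> n) - \<sigma>\<^sup>2 / 2 * (\<rho> n)\<^sup>2 = 0" if "1 \<le> n" for n
  proof -
    have "(LINT x:{1 / real n..} | levyQ q. 1 - exp (- \<rho> n * x)) = Fn n (\<rho> n)"
      by (simp add: Fn_def M_def set_lebesgue_integral_def)
    then show ?thesis using rho_eq[OF that] by simp
  qed
  have mono: "\<rho> n \<le> \<rho> m" if "1 \<le> n" "n \<le> m" for n m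
  proof (rule root_le[OF sigma delta mu, of "Fn m"])
    show "\<And>a l. 0 \<le> l \<Longrightarrow> l \<le> 1 \<Longrightarrow> 0 \<le> a \<Longrightarrow> l * Fn m a \<le> Fn m (l * a)" by (rule Fnconc)
    show "0 < \<rho> n" "0 < \<rho> m" using rho_pos that by auto
    show "\<delta> + \<mu> * \<rho> m + Fn m (\<rho> m) - \<sigma>\<^sup>2 / 2 * (\<rho> m)\<^sup>2 = 0" using geq that by simp
    have "Fn n (\<rho> n) \<le> Fn m (\<rho> n)" using Fn_mono[of n m "\<rho> n"] rho_pos[of n] that by simp
    then show "0 \<le> \<delta> + \<mu> * \<rho> n + Fn m (\<rho> n) - \<sigma>\<^sup>2 / 2 * (\<rho> n)\<^sup>2" using geq[OF that(1)] by simp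
  qed
  have C0: "0 \<le> C" unfolding C_def using AEpos by (intro integral_nonneg_AE) (auto elim: eventually_mono)
  define B where "B = max 1 (2 * (\<delta> + \<mu> + C) / \<sigma>\<^sup>2)"
  have Bb: "\<rho> n \<le> B" if "1 \<le> n" for n
  proof (cases "\<rho> n \<le> 1")
    case True then show ?thesis by (simp add: B_def)
  next
    case False
    let ?r = "\<rho> n"
    have "Fn n ?r \<le> ?r * C" using Fn_bound[of ?r n] False by simp
    hence "\<sigma>\<^sup>2 / 2 * ?r\<^sup>2 \<le> \<delta> + \<mu> * ?r + ?r * C" using geq[OF that] by simp
    also have "\<dots> \<le> (\<delta> + \<mu> + C) * ?r"
    proof -
      have "\<delta> * 1 \<le> \<delta> * ?r" using False delta by (intro mult_left_mono) auto
      then show ?thesis by (simp add: algebra_simps)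
    qed
    finally have "(\<sigma>\<^sup>2 / 2 * ?r) * ?r \<le> (\<delta> + \<mu> + C) * ?r" by (simp add: power2_eq_square algebra_simps)
    hence "\<sigma>\<^sup>2 / 2 * ?r \<le> \<delta> + \<mu> + C" using False by simp
    hence "?r \<le> 2 * (\<delta> + \<mu> + C) / \<sigma>\<^sup>2" using sigma by (simp add: field_simps)
    then show ?thesis by (simp add: B_def)
  qed
  define X where "X k = \<rho> (Suc k)" for k
  have incX: "incseq X" unfolding incseq_def X_def using mono by simp
  have bddX: "bdd_above (range X)" using Bb unfolding X_def bdd_above_def by auto
  define L where "L = (SUP i. X i)"
  have XL: "X \<longlonglongrightarrow> L" unfolding L_def by (rule LIMSEQ_incseq_SUP[OF bddX incX])
  have rhoL: "\<rho> \<longlonglongrightarrow> L" using XL unfolding X_def by (rule LIMSEQ_imp_Suc)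
  have Lpos: "0 < L" using incseq_le[OF incX XL, of 0] rho_pos[of 1] by (simp add: X_def)
  have LB: "L \<le> B" by (rule LIMSEQ_le_const2[OF XL]) (auto simp: X_def intro!: Bb)
  have X0: "0 \<le> X k" for k using rho_pos[of "Suc k"] by (simp add: X_def)
  have XB: "X k \<le> B" for k using Bb by (simp add: X_def)
  have FnL: "(\<lambda>k. Fn (Suc k) (X k)) \<longlonglongrightarrow> F L" unfolding Fn_def F_def
  proof (rule integral_dominated_convergence[where w = "\<lambda>x. max 1 B * min 1 x"])
    show "(\<lambda>x. 1 - exp (- L * x)) \<in> borel_measurable M" by (rule meas) measurable
    show "(\<lambda>x. indicator {1 / real (Suc k)..} x * (1 - exp (- X k * x))) \<in> borel_measurable M" for k
      by (rule meas) measurable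
    show "integrable M (\<lambda>x. max 1 B * min 1 x)" using Cint by simp
    show "AE x in M. (\<lambda>k. indicator {1 / real (Suc k)..} x * (1 - exp (- X k * x))) \<longlonglongrightarrow> 1 - exp (- L * x)"
      using AEpos
    proof eventually_elim
      case (elim x)
      obtain N :: nat where N: "1 / x < real N" using reals_Archimedean2 by blast
      have ev: "eventually (\<lambda>k. indicator {1 / real (Suc k)..} x * (1 - exp (- X k * x)) = 1 - exp (- X k * x)) sequentially"
        unfolding eventually_sequentially
      proof (intro exI allI impI)
        fix k assume "N \<le> k"
        hence "1 / x < real (Suc k)" using N by simp
        hence "1 / real (Suc k) \<le> x" using elim by (simp add: field_simps)
        thus "indicator {1 / real (Suc k)..} x * (1 - exp (- X k * x)) = 1 - exp (- X k * x)" by simp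
      qed
      have "(\<lambda>k. 1 - exp (- X k * x)) \<longlonglongrightarrow> 1 - exp (- L * x)"
        by (intro tendsto_intros XL)
      then show ?case using tendsto_cong[OF ev] by simp
    qed
    show "AE x in M. norm (indicator {1 / real (Suc k)..} x * (1 - exp (- X k * x))) \<le> max 1 B * min 1 x" for k
      using AEpos
    proof eventually_elim
      case (elim x)
      have "\<bar>indicator {1 / real (Suc k)..} x * (1 - exp (- X k * x))\<bar> \<le> max 1 (X k) * min 1 x"
        using bound1[of "X k" x "indicator {1 / real (Suc k)..} x"] X0[of k] elim
        by (auto simp: indicator_def)
      also have "\<dots> \<le> max 1 B * min 1 x" using XB[of k] elim by (intro mult_right_mono) auto
      finally show ?case by simp
    qed
  qed
  have "(\<lambda>k. \<delta> + \<mu> * X k + Fn (Suc k) (X k) - \<sigma>\<^sup>2 / 2 * (X k)\<^sup>2) \<longlonglongrightarrow> \<delta> + \<mu> * L + F L - \<sigma>\<^sup>2 / 2 * L\<^sup>2"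
    by (intro tendsto_intros XL FnL)
  moreover have "(\<lambda>k. \<delta> + \<mu> * X k + Fn (Suc k) (X k) - \<sigma>\<^sup>2 / 2 * (X k)\<^sup>2) = (\<lambda>k. 0)"
  proof
    fix k show "\<delta> + \<mu> * X k + Fn (Suc k) (X k) - \<sigma>\<^sup>2 / 2 * (X k)\<^sup>2 = 0"
      unfolding X_def by (rule geq) simp
  qed
  ultimately have gL: "\<delta> + \<mu> * L + F L - \<sigma>\<^sup>2 / 2 * L\<^sup>2 = 0"
    using LIMSEQ_unique tendsto_const by metis
  have phi: "phiD \<mu> \<sigma> q r = - \<mu> * r - F r + r\<^sup>2 * \<sigma>\<^sup>2 / 2" for r
  proof -
    have "(LINT x|levyQ q. exp (- r * x) - 1) = (LINT x|M. - (1 - exp (- r * x)))" by (simp add: M_def)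
    also have "\<dots> = - F r" unfolding F_def by (rule integral_minus)
    finally show ?thesis by (simp add: phiD_def)
  qed
  have phi_iff: "phiD \<mu> \<sigma> q r = \<delta> \<longleftrightarrow> \<delta> + \<mu> * r + F r - \<sigma>\<^sup>2 / 2 * r\<^sup>2 = 0" for r
    unfolding phi by (auto simp: algebra_simps)
  show ?thesis
  proof (intro exI[of _ L] conjI allI impI Lpos rhoL)
    show "phiD \<mu> \<sigma> q L = \<delta>" using gL phi_iff by simp
    fix r' assume r': "0 < r'" "phiD \<mu> \<sigma> q r' = \<delta>"
    hence g': "\<delta> + \<mu> * r' + F r' - \<sigma>\<^sup>2 / 2 * r'\<^sup>2 = 0" using phi_iff by simp
    have "r' \<le> L" using root_le[OF sigma delta mu Fconc r'(1) Lpos] g' gL by simp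
    moreover have "L \<le> r'" using root_le[OF sigma delta mu Fconc Lpos r'(1)] g' gL by simp
    ultimately show "r' = L" by simp
  qed
qed

end
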